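(* Consider Funding Games with $n$ players and $m$ items under the Highest Ratio Greedy (HRG) mechanism. Let $\mathbf{v}=(v_1,\dots,v_n)$ and $\mathbf{w}=(w_1,\dots,w_n)$ be any two valuation profiles, let $OPT^{\mathbf{v}}=(o_1,\dots,o_n)$ be an allocation maximizing $\sum_i v_i(X_i)$ over all allocations with $\sum_i X_i\le m$, and let $O(\mathbf{v})$ be the strategy profile in which each player $i$ makes the request $o_i^{req}=(o_i, v_i(o_i))$. Then for every strategy profile $\mathbf{s}$ that is valid with respect to both $\mathbf{v}$ and $\mathbf{w}$, $$\sum_{i=1}^n u_i(v_i; o_i^{req}, \mathbf{s}_{-i}) \;\ge\; sw(\mathbf{v}; O(\mathbf{v})) - sw(\mathbf{w}; \mathbf{s}),$$ i.e. the Funding Game is $(1,1)$-smooth with respect to the choice function $O$ and the social welfare objective.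
   Context: A (single-round) Funding Game has players $1,\dots,n$, $m$ identical items, and for each player $i$ a valuation function $v_i:\{0,\dots,m\}\to\mathbb{R}_{\ge 0}$ with $v_i(0)=0$, nondecreasing, and with diminishing marginal returns: $v_i(x)-v_i(x-1)\ge v_i(x+1)-v_i(x)$. A strategy (request) of player $i$ is a pair $(x_i,\tilde v_i)$ with $x_i\in\{0,\dots,m\}$ and reported value $\tilde v_i\ge 0$; it is valid with respect to $v_i$ if $\tilde v_i\le v_i(x_i)$. A strategy profile $\mathbf{s}$ is valid with respect to a valuation profile if every request is valid for the corresponding valuation. The HRG mechanism considers requests in descending order of the ratio $\tilde v_i/x_i$, breaking ties in favor of the player with lower index, and grants to each request in turn $\min(x_i, \text{number of items still available})$ items (requests with $x_i=0$ receive nothing); $X_i(\mathbf{s})$ denotes the number of items player $i$ receives. The payoff is $u_i(v_i;\mathbf{s})=v_i(X_i(\mathbf{s}))$, and for a valuation profile $\mathbf{w}$, $sw(\mathbf{w};\mathbf{s})=\sum_i w_i(X_i(\mathbf{s}))$. $(s_i',\mathbf{s}_{-i})$ denotes $\mathbf{s}$ with player $i$'s strategy replaced by $s_i'$. *)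

theory Defs
  imports Main Complex_Main "HOL-Library.Product_Lexorder"
begin

text \<open>Players are 0,...,n-1 (index order = the paper's order 1..n). A strategy profile
  assigns to each player i a request (x_i, reported value). A valuation profile assigns
  to each player a function nat => real; only its values on {0..m} matter.\<close>

type_synonym profile = "nat \<Rightarrow> nat \<times> real"
type_synonym valprofile = "nat \<Rightarrow> nat \<Rightarrow> real"

definition valuation :: "nat \<Rightarrow> (nat \<Rightarrow> real) \<Rightarrow> bool" where
  "valuation m f \<longleftrightarrow> f 0 = 0 \<and> (\<forall>x\<le>m. f x \<ge> 0)
     \<and> (\<forall>x<m. f x \<le> f (Suc x))
     \<and> (\<forall>x. 1 \<le> x \<and> x < m \<longrightarrow> f x - f (x - 1) \<ge> f (Suc x) - f x)"

definition valid_request :: "nat \<Rightarrow> (nat \<Rightarrow> real) \<Rightarrow> nat \<times> real \<Rightarrow> bool" where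
  "valid_request m f r \<longleftrightarrow> fst r \<le> m \<and> 0 \<le> snd r \<and> snd r \<le> f (fst r)"

definition valid_profile :: "nat \<Rightarrow> nat \<Rightarrow> valprofile \<Rightarrow> profile \<Rightarrow> bool" where
  "valid_profile n m v s \<longleftrightarrow> (\<forall>i<n. valid_request m (v i) (s i))"

text \<open>Ratio of a request (requests with x = 0 receive nothing regardless of position).\<close>
definition ratio :: "profile \<Rightarrow> nat \<Rightarrow> real" where
  "ratio s i = snd (s i) / real (fst (s i))"

definition hrg_order :: "nat \<Rightarrow> profile \<Rightarrow> nat list" where
  "hrg_order n s = sort_key (\<lambda>i. (- ratio s i, i)) [0..<n]"

fun grant :: "profile \<Rightarrow> nat \<Rightarrow> nat list \<Rightarrow> nat \<Rightarrow> nat" where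
  "grant s r [] = (\<lambda>_. 0)"
| "grant s r (i # is) = (let g = min (fst (s i)) r in (grant s (r - g) is)(i := g))"

definition HRG :: "nat \<Rightarrow> nat \<Rightarrow> profile \<Rightarrow> nat \<Rightarrow> nat" where
  "HRG n m s = grant s m (hrg_order n s)"

definition sw :: "nat \<Rightarrow> nat \<Rightarrow> valprofile \<Rightarrow> profile \<Rightarrow> real" where
  "sw n m w s = (\<Sum>i<n. w i (HRG n m s i))"

definition is_opt_alloc :: "nat \<Rightarrow> nat \<Rightarrow> valprofile \<Rightarrow> (nat \<Rightarrow> nat) \<Rightarrow> bool" where
  "is_opt_alloc n m v opt \<longleftrightarrow> (\<Sum>i<n. opt i) \<le> m \<and>
     (\<forall>X. (\<Sum>i<n. X i) \<le> m \<longrightarrow> (\<Sum>i<n. v i (X i)) \<le> (\<Sum>i<n. v i (opt i)))"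

definition O_profile :: "valprofile \<Rightarrow> (nat \<Rightarrow> nat) \<Rightarrow> profile" where
  "O_profile v opt = (\<lambda>i. (opt i, v i (opt i)))"

end

theory Submission
  imports Defs
begin

lemma grant_notin: "j \<notin> set L \<Longrightarrow> grant s r L j = 0"
  by (induction L arbitrary: r) (auto simp: Let_def)

lemma grant_le: "grant s r L j \<le> fst (s j)"
  by (induction L arbitrary: r) (auto simp: Let_def)

lemma grant_append2:
  "distinct (L1 @ L2) \<Longrightarrow> j \<in> set L2 \<Longrightarrow>
   grant s r (L1 @ L2) j = grant s (r - min r (sum_list (map (\<lambda>j. fst (s j)) L1))) L2 j"
proof (induction L1 arbitrary: r)
  case Nil then show ?case by simp
next
  case (Cons a L1)
  have "j \<noteq> a" using Cons.prems by auto
  then have "grant s r ((a#L1)@L2) j = grant s (r - min (fst (s a)) r) (L1@L2) j"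
    by (simp add: Let_def)
  also have "\<dots> = grant s (r - min (fst (s a)) r - min (r - min (fst (s a)) r) (sum_list (map (\<lambda>j. fst (s j)) L1))) L2 j"
    using Cons by auto
  also have "r - min (fst (s a)) r - min (r - min (fst (s a)) r) (sum_list (map (\<lambda>j. fst (s j)) L1))
      = r - min r (sum_list (map (\<lambda>j. fst (s j)) (a#L1)))" by auto
  finally show ?case .
qed

lemma grant_append1:
  "distinct (L1 @ L2) \<Longrightarrow> j \<in> set L1 \<Longrightarrow> grant s r (L1 @ L2) j = grant s r L1 j"
  by (induction L1 arbitrary: r) (auto simp: Let_def)

lemma grant_sum:
  "distinct L \<Longrightarrow> (\<Sum>j\<in>set L. grant s r L j) = min r (sum_list (map (\<lambda>j. fst (s j)) L))"
proof (induction L arbitrary: r)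
  case Nil then show ?case by simp
next
  case (Cons a L)
  define g where "g = min (fst (s a)) r"
  have na: "a \<notin> set L" using Cons.prems by auto
  have "(\<Sum>j\<in>set (a#L). grant s r (a#L) j) = g + (\<Sum>j\<in>set L. ((grant s (r-g) L)(a:=g)) j)"
    using na by (simp add: Let_def g_def)
  also have "(\<Sum>j\<in>set L. ((grant s (r-g) L)(a:=g)) j) = (\<Sum>j\<in>set L. grant s (r-g) L j)"
    using na by (intro sum.cong) auto
  also have "\<dots> = min (r-g) (sum_list (map (\<lambda>j. fst (s j)) L))" using Cons by auto
  finally have "(\<Sum>j\<in>set (a#L). grant s r (a#L) j) = g + min (r-g) (sum_list (map (\<lambda>j. fst (s j)) L))" .
  moreover have "g + min (r-g) (sum_list (map (\<lambda>j. fst (s j)) L)) = min r (sum_list (map (\<lambda>j. fst (s j)) (a#L)))"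
    by (auto simp: g_def)
  ultimately show ?case by simp
qed

lemma takeWhile_set:
  "sorted (map f L) \<Longrightarrow> set (takeWhile (\<lambda>x. f x < k) L) = {x \<in> set L. f x < k}"
proof (induction L)
  case Nil then show ?case by simp
next
  case (Cons a L)
  show ?case
  proof (cases "f a < k")
    case True then show ?thesis using Cons by auto
  next
    case False
    have "\<forall>y\<in>set L. f a \<le> f y" using Cons.prems by auto
    then show ?thesis using False by (auto dest: order.trans[rotated] simp: not_less)
  qed
qed

lemma conc_step: "valuation m f \<Longrightarrow> Suc k \<le> m \<Longrightarrow> real k * (f (Suc k) - f k) \<le> f k"
proof (induction k)
  case 0 then show ?case by (simp add: valuation_def)
next
  case (Suc k)
  have IH: "real k * (f (Suc k) - f k) \<le> f k" using Suc by auto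
  have c: "f (Suc (Suc k)) - f (Suc k) \<le> f (Suc k) - f k"
    using Suc.prems unfolding valuation_def
    by (metis One_nat_def Suc_le_eq diff_Suc_1 le_add1 plus_1_eq_Suc)
  have "real (Suc k) * (f (Suc (Suc k)) - f (Suc k)) \<le> real (Suc k) * (f (Suc k) - f k)"
    using c by (intro mult_left_mono) auto
  also have "\<dots> \<le> f (Suc k)" using IH by (simp add: algebra_simps)
  finally show ?case .
qed

lemma conc: "valuation m f \<Longrightarrow> X \<le> x \<Longrightarrow> x \<le> m \<Longrightarrow> real X * f x \<le> real x * f X"
proof (induction x)
  case 0 then show ?case by simp
next
  case (Suc x)
  show ?case
  proof (cases "X = Suc x")
    case True then show ?thesis by simp
  next
    case False
    then have Xx: "X \<le> x" using Suc.prems by auto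
    have IH: "real X * f x \<le> real x * f X" using Suc Xx by auto
    show ?thesis
    proof (cases "X = 0")
      case True then show ?thesis using Suc.prems by (simp add: valuation_def)
    next
      case False
      then have xpos: "real x > 0" using Xx by auto
      have st: "real x * (f (Suc x) - f x) \<le> f x" using conc_step[OF Suc.prems(1)] Suc.prems by auto
      have "real x * (real X * f (Suc x)) \<le> real X * (real (Suc x) * f x)"
      proof -
        have "real X * (real x * f (Suc x)) \<le> real X * (real (Suc x) * f x)"
          using st by (intro mult_left_mono) (auto simp: algebra_simps)
        then show ?thesis by (simp add: algebra_simps)
      qed
      also have "\<dots> = real (Suc x) * (real X * f x)" by (simp add: algebra_simps)
      also have "\<dots> \<le> real (Suc x) * (real x * f X)" using IH by (intro mult_left_mono) auto
      also have "\<dots> = real x * (real (Suc x) * f X)" by (simp add: algebra_simps)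
      finally show ?thesis using xpos by simp
    qed
  qed
qed


lemma hrg_basic: "distinct (hrg_order n s)" "set (hrg_order n s) = {..<n}"
  by (auto simp: hrg_order_def)

lemma HRG_le: "HRG n m s j \<le> fst (s j)"
  by (simp add: HRG_def grant_le)

lemma O_alloc:
  assumes "is_opt_alloc n m v opt" "i < n"
  shows "HRG n m (O_profile v opt) i = opt i"
proof -
  define sO where "sO = O_profile v opt"
  define L where "L = hrg_order n sO"
  have d: "distinct L" and sL: "set L = {..<n}" using hrg_basic unfolding L_def by auto
  have le: "\<And>j. HRG n m sO j \<le> opt j" using HRG_le[of n m sO] by (simp add: sO_def O_profile_def)
  have "(\<Sum>j<n. HRG n m sO j) = (\<Sum>j\<in>set L. grant sO m L j)" using sL by (simp add: HRG_def L_def)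
  also have "\<dots> = min m (sum_list (map (\<lambda>j. fst (sO j)) L))" using grant_sum[OF d] .
  also have "sum_list (map (\<lambda>j. fst (sO j)) L) = (\<Sum>j<n. opt j)"
    using d sL by (simp add: sum_list_distinct_conv_sum_set sO_def O_profile_def)
  finally have eq: "(\<Sum>j<n. HRG n m sO j) = (\<Sum>j<n. opt j)"
    using assms(1) by (simp add: is_opt_alloc_def)
  show ?thesis
  proof (rule ccontr)
    assume "HRG n m (O_profile v opt) i \<noteq> opt i"
    then have "HRG n m sO i < opt i" using le[of i] by (simp add: sO_def)
    then have "(\<Sum>j<n. HRG n m sO j) < (\<Sum>j<n. opt j)"
      using assms(2) le by (intro sum_strict_mono_ex1) auto
    then show False using eq by simp
  qed
qed

lemma F3:
  assumes "i < n" "HRG n m (s(i := (ob, val))) i < ob"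
  shows "real m - real (HRG n m (s(i := (ob, val))) i)
     \<le> (\<Sum>j\<in>{j. j < n \<and> val / real ob \<le> ratio s j}. real (HRG n m s j))"
proof -
  define s' where "s' = s(i := (ob, val))"
  define \<rho> where "\<rho> = val / real ob"
  define key' where "key' = (\<lambda>j. (- ratio s' j, j))"
  define key where "key = (\<lambda>j. (- ratio s j, j))"
  define L' where "L' = hrg_order n s'"
  have L'def: "L' = sort_key key' [0..<n]" by (simp add: L'_def hrg_order_def key'_def)
  have dL': "distinct L'" and sL': "set L' = {..<n}" using hrg_basic unfolding L'_def by auto
  have sorted': "sorted (map key' L')" by (simp add: L'def)
  have "distinct (map key' L')" using dL' by (simp add: distinct_map inj_on_def key'_def)
  hence strict: "sorted_wrt (<) (map key' L')" using sorted' strict_sorted_iff by blast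
  from sL' assms(1) obtain P Q where LPQ: "L' = P @ i # Q"
    by (metis lessThan_iff split_list)
  have Pk: "\<forall>j\<in>set P. key' j < key' i" using strict LPQ by (auto simp: sorted_wrt_append sorted_wrt_map)
  have iP: "i \<notin> set P" using Pk by auto
  have dP: "distinct (P @ i # Q)" using dL' LPQ by simp
  define SP where "SP = (\<Sum>j\<in>set P. fst (s j))"
  have SPeq: "sum_list (map (\<lambda>j. fst (s' j)) P) = SP"
  proof -
    have "sum_list (map (\<lambda>j. fst (s' j)) P) = (\<Sum>j\<in>set P. fst (s' j))"
      using dP by (simp add: sum_list_distinct_conv_sum_set)
    also have "\<dots> = SP" unfolding SP_def using iP by (intro sum.cong) (auto simp: s'_def)
    finally show ?thesis .
  qed
  have "HRG n m s' i = grant s' m (P @ (i # Q)) i" by (simp add: HRG_def L'_def[symmetric] LPQ)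
  also have "\<dots> = grant s' (m - min m SP) (i # Q) i" using grant_append2[OF dP] SPeq by simp
  also have "\<dots> = min ob (m - min m SP)" by (simp add: s'_def Let_def)
  finally have Xi: "HRG n m s' i = min ob (m - min m SP)" .
  with assms(2) have Xi2: "HRG n m s' i = m - min m SP" by (simp add: s'_def)
  hence lhs: "real m - real (HRG n m s' i) = real (min m SP)" by simp
  define k where "k = (- \<rho>, i)"
  have ki: "key' i = k" by (simp add: key'_def k_def s'_def ratio_def \<rho>_def)
  define L where "L = hrg_order n s"
  have Ldef: "L = sort_key key [0..<n]" by (simp add: L_def hrg_order_def key_def)
  have dL: "distinct L" and sL: "set L = {..<n}" using hrg_basic unfolding L_def by auto
  have sortedL: "sorted (map key L)" by (simp add: Ldef)
  define L1 where "L1 = takeWhile (\<lambda>j. key j < k) L"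
  define L2 where "L2 = dropWhile (\<lambda>j. key j < k) L"
  have L12: "L = L1 @ L2" by (simp add: L1_def L2_def)
  define B where "B = {j. j < n \<and> key j < k}"
  have sL1: "set L1 = B" unfolding L1_def B_def using takeWhile_set[OF sortedL] sL by auto
  have dL12: "distinct (L1 @ L2)" using dL L12 by simp
  have PB: "set P \<subseteq> B"
  proof
    fix j assume jP: "j \<in> set P"
    then have "j < n" using sL' LPQ by auto
    moreover have "j \<noteq> i" using jP iP by auto
    moreover have "key' j < k" using Pk jP ki by auto
    ultimately show "j \<in> B" by (simp add: B_def key_def key'_def s'_def ratio_def)
  qed
  have "(\<Sum>j\<in>B. HRG n m s j) = (\<Sum>j\<in>set L1. grant s m (L1 @ L2) j)"
    by (simp add: HRG_def L_def[symmetric] L12 sL1)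
  also have "\<dots> = (\<Sum>j\<in>set L1. grant s m L1 j)"
    using grant_append1[OF dL12] by (intro sum.cong) auto
  also have "\<dots> = min m (sum_list (map (\<lambda>j. fst (s j)) L1))"
    using grant_sum dL12 by auto
  also have "sum_list (map (\<lambda>j. fst (s j)) L1) = (\<Sum>j\<in>B. fst (s j))"
    using dL12 sL1 by (simp add: sum_list_distinct_conv_sum_set)
  finally have sB: "(\<Sum>j\<in>B. HRG n m s j) = min m (\<Sum>j\<in>B. fst (s j))" .
  have finB: "finite B" by (simp add: B_def)
  have "SP \<le> (\<Sum>j\<in>B. fst (s j))" unfolding SP_def using PB finB by (intro sum_mono2) auto
  then have "min m SP \<le> (\<Sum>j\<in>B. HRG n m s j)" using sB by simp
  then have "real (min m SP) \<le> (\<Sum>j\<in>B. real (HRG n m s j))" by (metis of_nat_le_iff of_nat_sum)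
  also have "\<dots> \<le> (\<Sum>j\<in>{j. j < n \<and> val / real ob \<le> ratio s j}. real (HRG n m s j))"
  proof (intro sum_mono2)
    show "B \<subseteq> {j. j < n \<and> val / real ob \<le> ratio s j}"
      by (auto simp: B_def key_def k_def \<rho>_def less_prod_def)
  qed auto
  finally show ?thesis using lhs by (simp add: s'_def)
qed


theorem mainTheorem1:
  fixes n m :: nat and v w :: valprofile and opt :: "nat \<Rightarrow> nat" and s :: profile
  assumes "\<forall>i<n. valuation m (v i)"
    and "\<forall>i<n. valuation m (w i)"
    and "is_opt_alloc n m v opt"
    and "valid_profile n m v s"
    and "valid_profile n m w s"
  shows "(\<Sum>i<n. v i (HRG n m (s(i := (opt i, v i (opt i)))) i))
           \<ge> sw n m v (O_profile v opt) - sw n m w s"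
proof -
  define Xp where "Xp i = HRG n m (s(i := (opt i, v i (opt i)))) i" for i
  define Y where "Y = HRG n m s"
  define \<rho> where "\<rho> i = v i (opt i) / real (opt i)" for i
  define r where "r j = ratio s j" for j
  have sumopt: "(\<Sum>i<n. opt i) \<le> m" using assms(3) by (simp add: is_opt_alloc_def)
  have opt_le: "opt i \<le> m" if "i < n" for i
    using sumopt member_le_sum[of i "{..<n}" opt] that by auto
  have Xp_le: "Xp i \<le> opt i" for i using HRG_le[of n m "s(i := (opt i, v i (opt i)))" i]
    by (simp add: Xp_def)
  have vs: "valid_request m (v j) (s j)" "valid_request m (w j) (s j)" if "j < n" for j
    using assms(4,5) that by (auto simp: valid_profile_def)
  have Y_le: "Y j \<le> fst (s j)" for j by (simp add: Y_def HRG_le)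
  have vnn: "v i x \<ge> 0" if "i < n" "x \<le> m" for i x using assms(1) that by (auto simp: valuation_def)
  have wnn: "w i x \<ge> 0" if "i < n" "x \<le> m" for i x using assms(2) that by (auto simp: valuation_def)
  have \<rho>nn: "\<rho> i \<ge> 0" if "i < n" for i using vnn[OF that opt_le[OF that]] by (simp add: \<rho>_def)
  have rnn: "r j \<ge> 0" if "j < n" for j using vs(1)[OF that] by (simp add: r_def ratio_def valid_request_def)
  have E1: "real (Xp i) * \<rho> i \<le> v i (Xp i)" if "i < n" for i
  proof (cases "opt i = 0")
    case True then show ?thesis using Xp_le[of i] vnn[OF that, of 0] by (simp add: \<rho>_def)
  next
    case False
    have "real (Xp i) * v i (opt i) \<le> real (opt i) * v i (Xp i)"
      using conc[of m "v i" "Xp i" "opt i"] assms(1) that Xp_le opt_le by auto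
    then show ?thesis using False by (simp add: \<rho>_def field_simps)
  qed
  have E2: "sw n m v (O_profile v opt) = (\<Sum>i<n. real (opt i) * \<rho> i)"
    unfolding sw_def using assms(1) by (intro sum.cong) (auto simp: O_alloc[OF assms(3)] \<rho>_def valuation_def)
  have E3: "(\<Sum>j<n. real (Y j) * r j) \<le> sw n m w s"
    unfolding sw_def Y_def[symmetric]
  proof (intro sum_mono)
    fix j assume "j \<in> {..<n}"
    then have j: "j < n" by simp
    show "real (Y j) * r j \<le> w j (Y j)"
    proof (cases "fst (s j) = 0")
      case True then show ?thesis using Y_le[of j] wnn[OF j, of 0] by (simp add: r_def ratio_def)
    next
      case False
      have xm: "fst (s j) \<le> m" "snd (s j) \<le> w j (fst (s j))" using vs(2)[OF j] by (auto simp: valid_request_def)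
      have c: "real (Y j) * w j (fst (s j)) \<le> real (fst (s j)) * w j (Y j)"
        using conc[of m "w j" "Y j" "fst (s j)"] assms(2) j Y_le xm by auto
      have "real (Y j) * snd (s j) \<le> real (Y j) * w j (fst (s j))"
        using xm by (intro mult_left_mono) auto
      with c have "real (Y j) * snd (s j) \<le> real (fst (s j)) * w j (Y j)" by linarith
      then show ?thesis using False by (simp add: r_def ratio_def field_simps)
    qed
  qed
  define a where "a i = real (opt i) - real (Xp i)" for i
  have ann: "a i \<ge> 0" for i using Xp_le[of i] by (simp add: a_def)
  have Ynn: "(\<Sum>j<n. real (Y j) * r j) \<ge> 0" using rnn by (intro sum_nonneg) auto
  have E4: "(\<Sum>i<n. a i * \<rho> i) \<le> (\<Sum>j<n. real (Y j) * r j)"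
  proof (cases "\<exists>i<n. a i > 0")
    case False
    then have "\<forall>i<n. a i = 0" using ann by (metis order_le_less)
    then show ?thesis using Ynn by simp
  next
    case True
    define I where "I = {i. i < n \<and> a i > 0}"
    have finI: "finite I" and neI: "I \<noteq> {}" using True by (auto simp: I_def)
    define M where "M = Max (\<rho> ` I)"
    have "M \<in> \<rho> ` I" unfolding M_def using finI neI by (intro Max_in) auto
    then obtain k where kI: "k \<in> I" and kM: "\<rho> k = M" by auto
    have kmax: "\<rho> i \<le> \<rho> k" if "i \<in> I" for i using finI that kM unfolding M_def by auto
    have kn: "k < n" and ak: "a k > 0" using kI by (auto simp: I_def)
    have "(\<Sum>i<n. a i * \<rho> i) \<le> (\<Sum>i<n. a i * \<rho> k)"
    proof (intro sum_mono)
      fix i assume "i \<in> {..<n}"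
      show "a i * \<rho> i \<le> a i * \<rho> k"
      proof (cases "a i > 0")
        case True then show ?thesis using kmax[of i] \<open>i \<in> {..<n}\<close> by (auto simp: I_def)
      next
        case False then have "a i = 0" using ann[of i] by simp
        then show ?thesis by simp
      qed
    qed
    also have "\<dots> = (\<Sum>i<n. a i) * \<rho> k" by (simp add: sum_distrib_right)
    also have "(\<Sum>i<n. a i) \<le> real m - real (Xp k)"
    proof -
      have "(\<Sum>i<n. a i) = (\<Sum>i<n. real (opt i)) - (\<Sum>i<n. real (Xp i))"
        by (simp add: a_def sum_subtractf)
      moreover have "(\<Sum>i<n. real (opt i)) \<le> real m" using sumopt by (metis of_nat_le_iff of_nat_sum)
      moreover have "real (Xp k) \<le> (\<Sum>i<n. real (Xp i))"
        using kn by (intro member_le_sum) auto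
      ultimately show ?thesis by linarith
    qed
    hence "(\<Sum>i<n. a i) * \<rho> k \<le> (real m - real (Xp k)) * \<rho> k"
      using \<rho>nn[OF kn] by (intro mult_right_mono) auto
    also have "real m - real (Xp k) \<le> (\<Sum>j\<in>{j. j < n \<and> \<rho> k \<le> r j}. real (Y j))"
    proof -
      have "Xp k < opt k" using ak by (simp add: a_def)
      from F3[of k n m s "opt k" "v k (opt k)", OF kn this[unfolded Xp_def]]
      show ?thesis by (simp add: Xp_def Y_def \<rho>_def r_def)
    qed
    hence "(real m - real (Xp k)) * \<rho> k \<le> (\<Sum>j\<in>{j. j < n \<and> \<rho> k \<le> r j}. real (Y j)) * \<rho> k"
      using \<rho>nn[OF kn] by (intro mult_right_mono) auto
    also have "\<dots> = (\<Sum>j\<in>{j. j < n \<and> \<rho> k \<le> r j}. real (Y j) * \<rho> k)" by (simp add: sum_distrib_right)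
    also have "\<dots> \<le> (\<Sum>j\<in>{j. j < n \<and> \<rho> k \<le> r j}. real (Y j) * r j)"
      by (intro sum_mono mult_left_mono) auto
    also have "\<dots> \<le> (\<Sum>j<n. real (Y j) * r j)"
      using rnn by (intro sum_mono2) auto
    finally show ?thesis .
  qed
  have "(\<Sum>i<n. a i * \<rho> i) = (\<Sum>i<n. real (opt i) * \<rho> i) - (\<Sum>i<n. real (Xp i) * \<rho> i)"
    by (simp add: a_def left_diff_distrib sum_subtractf)
  moreover have "(\<Sum>i<n. real (Xp i) * \<rho> i) \<le> (\<Sum>i<n. v i (Xp i))" using E1 by (intro sum_mono) auto
  ultimately show ?thesis using E2 E3 E4 unfolding Xp_def by linarith
qed

end
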